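(* Let $\mathcal{X}=(\mathcal{X}_t)_{t\ge0}$ be a continuous-time Markov chain on a finite state space $E$ with rate matrix $(Q(i,j))_{i,j\in E}$, and let $W:E\to\mathbb{R}$ be such that $Q(i,j)>0$ implies $W(j)>W(i)$ (a Markov chain with strictly monotone orbits with respect to $W$). Define $\Psi:\mathbb{R}^E\to\mathbb{R}$ by $\Psi(p)=\sum_{i\in E}p(i)W(i)$. Then the forward equation \[ \dot p_t=\sum_{i\in E}\sum_{j\in E}p_t(i)Q(i,j)(j-i) \] for the law $p_t\in\mathbb{R}^E$ of $\mathcal{X}_t$ is equivalent to \[ \dot p_t=K(p_t)\nabla\Psi(p_t), \] where $K$ takes values in the symmetric positive semi-definite $E\times E$ matrices, is continuous on the set $\mathcal{P}(E)$ of probability vectors on $E$, and is smooth on its interior.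
   Context: Vectors in $\mathbb{R}^E$ are written as formal sums $p=\sum_{i\in E}p(i)\,i$, each $i\in E$ being identified with the corresponding standard basis vector; $\nabla$ is the Euclidean gradient on $\mathbb{R}^E$. A rate matrix has nonnegative off-diagonal entries and rows summing to zero. *)

theory Defs
  imports "HOL-Analysis.Analysis"
begin

definition rate_matrix :: "real^'e^'e \<Rightarrow> bool" where
  "rate_matrix Q \<longleftrightarrow> (\<forall>i j. i \<noteq> j \<longrightarrow> 0 \<le> Q$i$j) \<and> (\<forall>i. (\<Sum>j\<in>UNIV. Q$i$j) = 0)"

definition prob_vectors :: "(real^'e::finite) set" where
  "prob_vectors = {p. (\<forall>i. 0 \<le> p$i) \<and> (\<Sum>i\<in>UNIV. p$i) = 1}"

definition prob_vectors_interior :: "(real^'e::finite) set" where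
  "prob_vectors_interior = {p. (\<forall>i. 0 < p$i) \<and> (\<Sum>i\<in>UNIV. p$i) = 1}"

definition gradient :: "(real^'e::finite \<Rightarrow> real) \<Rightarrow> real^'e \<Rightarrow> real^'e" where
  "gradient f p = (THE g. (f has_derivative (\<lambda>h. g \<bullet> h)) (at p))"

text \<open>C-infinity on a set U: all iterated partial derivatives D ds (ds a list of
  basis directions) exist, are continuous on U, and each is Frechet differentiable
  at every point of U with partials given by the next level.\<close>
definition smooth_on :: "'a::euclidean_space set \<Rightarrow> ('a \<Rightarrow> 'b::real_normed_vector) \<Rightarrow> bool" where
  "smooth_on U f \<longleftrightarrow> (\<exists>D. D [] = f \<and>
     (\<forall>ds. set ds \<subseteq> Basis \<longrightarrow> continuous_on U (D ds) \<and>
        (\<forall>x\<in>U. (D ds has_derivative (\<lambda>h. \<Sum>b\<in>Basis. (h \<bullet> b) *\<^sub>R D (b # ds) x)) (at x))))"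

text \<open>K is smooth on the interior of P(E): smooth on some open neighbourhood of it.\<close>
definition smooth_near :: "'a::euclidean_space set \<Rightarrow> ('a \<Rightarrow> 'b::real_normed_vector) \<Rightarrow> bool" where
  "smooth_near S f \<longleftrightarrow> (\<exists>U. open U \<and> S \<subseteq> U \<and> smooth_on U f)"

definition sym_psd :: "real^'e^'e \<Rightarrow> bool" where
  "sym_psd A \<longleftrightarrow> transpose A = A \<and> (\<forall>x. 0 \<le> x \<bullet> (A *v x))"

text \<open>Right-hand side of the forward equation, states identified with basis vectors.\<close>
definition forward_field :: "real^'e^'e \<Rightarrow> real^'e \<Rightarrow> real^'e::finite" where
  "forward_field Q p = (\<Sum>i\<in>UNIV. \<Sum>j\<in>UNIV. (p$i * Q$i$j) *\<^sub>R (axis j 1 - axis i 1))"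

end

theory Submission
  imports Defs
begin

lemma lin_smooth:
  fixes K :: "'a::euclidean_space \<Rightarrow> 'b::real_normed_vector"
  assumes lin: "linear K"
  shows "smooth_on U K"
proof -
  define D where "D = (\<lambda>ds::'a list. if ds = [] then K else if length ds = 1 then (\<lambda>x. K (hd ds)) else (\<lambda>x. 0))"
  have bl: "bounded_linear K" using lin linear_conv_bounded_linear by blast
  have rep: "K h = (\<Sum>b\<in>Basis. (h \<bullet> b) *\<^sub>R K b)" for h
  proof -
    have "K h = K (\<Sum>b\<in>Basis. (h \<bullet> b) *\<^sub>R b)" by (simp add: euclidean_representation)
    also have "\<dots> = (\<Sum>b\<in>Basis. (h \<bullet> b) *\<^sub>R K b)"
      using lin by (simp add: linear_sum linear_scale)
    finally show ?thesis .
  qed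
  have "D [] = K" by (simp add: D_def)
  moreover have "continuous_on U (D ds) \<and>
        (\<forall>x\<in>U. (D ds has_derivative (\<lambda>h. \<Sum>b\<in>Basis. (h \<bullet> b) *\<^sub>R D (b # ds) x)) (at x))" for ds
  proof (cases "ds = []")
    case True
    have "(K has_derivative K) (at x)" for x using bl by (rule bounded_linear_imp_has_derivative)
    moreover have "(\<lambda>h. \<Sum>b\<in>Basis. (h \<bullet> b) *\<^sub>R D (b # ds) x) = K" for x
    proof
      fix h show "(\<Sum>b\<in>Basis. (h \<bullet> b) *\<^sub>R D (b # ds) x) = K h"
        unfolding rep[of h] using True by (simp add: D_def)
    qed
    moreover have "continuous_on U K" using bl linear_continuous_on by blast
    ultimately show ?thesis using True by (simp add: D_def)
  next
    case False
    have c: "\<exists>c. D ds = (\<lambda>x. c)" using False by (auto simp: D_def)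
    have z: "D (b # ds) = (\<lambda>x. 0)" for b using False by (auto simp: D_def)
    show ?thesis using c z False by (auto simp: D_def)
  qed
  ultimately show ?thesis unfolding smooth_on_def by blast
qed

theorem theorem5p2:
  fixes Q :: "real^'e::finite^'e" and W :: "'e \<Rightarrow> real"
  assumes "rate_matrix Q"
    and "\<And>i j. Q$i$j > 0 \<Longrightarrow> W j > W i"
  defines "\<Psi> \<equiv> (\<lambda>p::real^'e. \<Sum>i\<in>UNIV. p$i * W i)"
  shows "\<exists>K :: real^'e \<Rightarrow> real^'e^'e.
           (\<forall>p\<in>prob_vectors. sym_psd (K p))
         \<and> continuous_on prob_vectors K
         \<and> smooth_near prob_vectors_interior K
         \<and> (\<forall>p\<in>prob_vectors. forward_field Q p = K p *v gradient \<Psi> p)"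
proof -
  define c where "c i j = (if Q$i$j > 0 then Q$i$j / (W j - W i) else 0)" for i j
  define v where "v i j = (axis j 1 - axis i 1 :: real^'e)" for i j
  define M where "M i = (\<chi> a b. \<Sum>j\<in>UNIV. c i j * (v i j $ a * v i j $ b))" for i
  define K where "K p = (\<Sum>i\<in>UNIV. (p$i) *\<^sub>R M i)" for p :: "real^'e"
  define w where "w = (\<chi> i. W i)"
  have c_nn: "0 \<le> c i j" for i j using assms(2)[of i j] by (auto simp: c_def)
  have lin: "linear K"
    by (rule linearI) (simp_all add: K_def scaleR_add_left sum.distrib scaleR_sum_right)
  have Kmult: "K p *v x = (\<Sum>i\<in>UNIV. \<Sum>j\<in>UNIV. (p$i * c i j * (v i j \<bullet> x)) *\<^sub>R v i j)" for p x
  proof (rule vec_eq_iff[THEN iffD2], rule allI)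
    fix a
    have "(K p *v x)$a = (\<Sum>b\<in>UNIV. \<Sum>i\<in>UNIV. \<Sum>j\<in>UNIV. p$i * c i j * v i j$a * v i j$b * x$b)"
      by (simp add: matrix_vector_mult_def K_def M_def sum_distrib_left sum_distrib_right mult_ac)
    also have "\<dots> = (\<Sum>i\<in>UNIV. \<Sum>b\<in>UNIV. \<Sum>j\<in>UNIV. p$i * c i j * v i j$a * v i j$b * x$b)"
      by (rule sum.swap)
    also have "\<dots> = (\<Sum>i\<in>UNIV. \<Sum>j\<in>UNIV. \<Sum>b\<in>UNIV. p$i * c i j * v i j$a * v i j$b * x$b)"
      by (rule sum.cong[OF refl], rule sum.swap)
    also have "\<dots> = (\<Sum>i\<in>UNIV. \<Sum>j\<in>UNIV. (p$i * c i j * (v i j \<bullet> x)) *\<^sub>R v i j) $ a"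
      by (simp add: inner_vec_def sum_distrib_left sum_distrib_right mult_ac)
    finally show "(K p *v x)$a = (\<Sum>i\<in>UNIV. \<Sum>j\<in>UNIV. (p$i * c i j * (v i j \<bullet> x)) *\<^sub>R v i j) $ a" .
  qed
  have grad: "gradient \<Psi> p = w" for p
  proof -
    have Pw: "\<Psi> = (\<lambda>q. w \<bullet> q)"
      by (rule ext) (simp add: \<Psi>_def w_def inner_vec_def mult.commute)
    have d: "(\<Psi> has_derivative (\<lambda>h. w \<bullet> h)) (at p)"
      unfolding Pw by (rule has_derivative_inner_right[OF has_derivative_ident])
    show ?thesis unfolding gradient_def
    proof (rule the_equality)
      show "(\<Psi> has_derivative (\<lambda>h. w \<bullet> h)) (at p)" by (rule d)
    next
      fix g assume "(\<Psi> has_derivative (\<lambda>h. g \<bullet> h)) (at p)"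
      with d have "(\<lambda>h. g \<bullet> h) = (\<lambda>h. w \<bullet> h)" by (metis has_derivative_unique)
      then have "g \<bullet> (g - w) = w \<bullet> (g - w)" by metis
      then have "(g - w) \<bullet> (g - w) = 0" by (simp add: inner_diff_left)
      then show "g = w" by simp
    qed
  qed
  have sym: "sym_psd (K p)" if "p \<in> prob_vectors" for p
  proof -
    have pn: "0 \<le> p$i" for i using that by (simp add: prob_vectors_def)
    have "transpose (K p) = K p"
      by (simp add: vec_eq_iff transpose_def K_def M_def mult_ac)
    moreover have "0 \<le> x \<bullet> (K p *v x)" for x
    proof -
      have "x \<bullet> (K p *v x) = (\<Sum>i\<in>UNIV. \<Sum>j\<in>UNIV. p$i * c i j * ((v i j \<bullet> x) * (v i j \<bullet> x)))"
        unfolding Kmult by (simp add: inner_sum_right inner_commute mult.assoc)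
      also have "\<dots> \<ge> 0"
        by (intro sum_nonneg mult_nonneg_nonneg pn c_nn zero_le_square)
      finally show ?thesis .
    qed
    ultimately show ?thesis by (simp add: sym_psd_def)
  qed
  have cont: "continuous_on prob_vectors K"
    using lin linear_continuous_on linear_conv_bounded_linear by blast
  have sm: "smooth_near prob_vectors_interior K"
    unfolding smooth_near_def using lin_smooth[OF lin, of UNIV] by blast
  have fw: "forward_field Q p = K p *v gradient \<Psi> p" for p
  proof -
    have vw: "v i j \<bullet> w = W j - W i" for i j
      by (simp add: v_def w_def inner_diff_left inner_axis')
    have tm: "(p$i * c i j * (W j - W i)) *\<^sub>R v i j = (p$i * Q$i$j) *\<^sub>R (axis j 1 - axis i 1)" for i j
    proof (cases "Q$i$j > 0")
      case True
      then have "W j - W i > 0" using assms(2) by simp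
      then show ?thesis using True by (simp add: c_def v_def)
    next
      case False
      show ?thesis
      proof (cases "i = j")
        case True then show ?thesis by (simp add: v_def)
      next
        case ne: False
        then have "Q$i$j = 0" using False assms(1) unfolding rate_matrix_def
          by (meson linorder_neqE_linordered_idom not_less)
        then show ?thesis using False by (simp add: c_def)
      qed
    qed
    show ?thesis unfolding grad Kmult forward_field_def vw tm ..
  qed
  show ?thesis using sym cont sm fw by blast
qed

end
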